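(* For each combinatorial line $L$ of $\mathrm{HJ}(d,n)$, there is an affine function $g_L:\mathbb{R}^5\to\mathbb{R}$ that vanishes on $\nu(P_L)$ and is positive on $\nu(P\setminus P_L)$. Hence $\conv(\nu(P_L))$ is a face of $\conv(\nu(P))$.
   Context: Combinatorial lines and $\mathrm{HJ}(d,n)$: for $\tau\in([d]\cup\{*\})^n\setminus[d]^n$ and $k\in\mathbb{R}$, $\sigma(\tau,k)$ is $\tau$ with every $*$ replaced by $k$; the combinatorial line is $L_\tau=\{\sigma(\tau,k):k\in[d]\}$, and $\mathrm{HJ}(d,n)$ is the hypergraph on $[d]^n$ whose hyperedges are all combinatorial lines. Choose vectors $v_1,\dots,v_n\in\mathbb{R}^2$, each with positive $x$-component, and for $\sigma\in\mathbb{R}^n$ set $p_\sigma=\sum_{i=1}^n\sigma_i v_i$; the $v_i$ are (after perturbation) such that the points $p_\sigma$, $\sigma\in[d]^n$, are distinct. Let $P=\{p_\sigma:\sigma\in[d]^n\}$. For a combinatorial line $L=L_\tau$, let $P_L=\{p_\sigma:\sigma\in L\}$ and let $S_L=\{p_{\sigma(\tau,t)}:t\in\mathbb{R}\}$ be the affine span of $P_L$, a line $y=a_Lx+b_L$ of finite slope. The $v_i$ are further assumed (after perturbation) to satisfy $S_L\cap P=P_L$ for every combinatorial line $L$. The map $\nu:\mathbb{R}^2\to\mathbb{R}^5$ is $\nu(x,y)=(x^2,xy,y^2,x,y)$. *)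

theory Defs
  imports "HOL-Analysis.Analysis"
begin

text \<open>Words of [d]^n are real lists of length n with entries in {1..d} (coordinate i is
  the list entry at index i-1). A pattern tau is an option list: None stands for the
  wildcard *.\<close>

definition cube :: "nat \<Rightarrow> nat \<Rightarrow> real list set" where
  "cube d n = {\<sigma>. length \<sigma> = n \<and> set \<sigma> \<subseteq> real ` {1..d}}"

definition patterns :: "nat \<Rightarrow> nat \<Rightarrow> nat option list set" where
  "patterns d n = {\<tau>. length \<tau> = n \<and> set \<tau> \<subseteq> insert None (Some ` {1..d}) \<and> None \<in> set \<tau>}"

definition subst_star :: "nat option list \<Rightarrow> real \<Rightarrow> real list" where
  "subst_star \<tau> t = map (\<lambda>e. case e of None \<Rightarrow> t | Some k \<Rightarrow> real k) \<tau>"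

definition comb_line :: "nat \<Rightarrow> nat option list \<Rightarrow> real list set" where
  "comb_line d \<tau> = {subst_star \<tau> (real k) | k. k \<in> {1..d}}"

definition pt :: "(nat \<Rightarrow> real \<times> real) \<Rightarrow> real list \<Rightarrow> real \<times> real" where
  "pt v \<sigma> = (\<Sum>i<length \<sigma>. (\<sigma> ! i) *\<^sub>R v i)"

definition span_line :: "(nat \<Rightarrow> real \<times> real) \<Rightarrow> nat option list \<Rightarrow> (real \<times> real) set" where
  "span_line v \<tau> = {pt v (subst_star \<tau> t) | t. True}"

definition nu :: "real \<times> real \<Rightarrow> real ^ 5" where
  "nu p = (case p of (x, y) \<Rightarrow> vector [x\<^sup>2, x * y, y\<^sup>2, x, y])"

definition affine_fun :: "('a::real_inner \<Rightarrow> real) \<Rightarrow> bool" where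
  "affine_fun g \<longleftrightarrow> (\<exists>a b. \<forall>x. g x = inner a x + b)"

end

theory Submission
  imports Defs
begin

lemma exhaust_5':
  fixes x :: 5
  shows "x = 1 \<or> x = 2 \<or> x = 3 \<or> x = 4 \<or> x = 5"
proof (induct x)
  case (of_int z)
  then have "z = 0 \<or> z = 1 \<or> z = 2 \<or> z = 3 \<or> z = 4" by fastforce
  then show ?case by auto
qed

lemma inner5: "inner (vector [a1,a2,a3,a4,a5] :: real^5) (vector [b1,b2,b3,b4,b5]) = a1*b1+a2*b2+a3*b3+a4*b4+a5*b5"
proof -
  have U: "(UNIV::5 set) = {1,2,3,4,5}"
    using exhaust_5' by auto
  show ?thesis unfolding inner_vec_def U by (simp add: vector_def)
qed

lemma length_subst [simp]: "length (subst_star \<tau> t) = length \<tau>"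
  by (simp add: subst_star_def)

lemma pt_subst:
  "pt v (subst_star \<tau> t) = pt v (subst_star \<tau> 0) +
     t *\<^sub>R (\<Sum>i<length \<tau>. (if \<tau>!i = None then 1 else 0) *\<^sub>R v i)"
proof -
  have "\<And>i. i < length \<tau> \<Longrightarrow> (subst_star \<tau> t ! i) *\<^sub>R v i =
     (subst_star \<tau> 0 ! i) *\<^sub>R v i + t *\<^sub>R ((if \<tau>!i = None then 1 else 0) *\<^sub>R v i)"
    by (auto simp: subst_star_def scaleR_add_left split: option.splits)
  then show ?thesis
    unfolding pt_def by (simp add: sum.distrib scaleR_right.sum)
qed

lemma finite_cube: "finite (cube d n)"
proof -
  have "cube d n \<subseteq> {xs. set xs \<subseteq> real ` {1..d} \<and> length xs = n}"
    by (auto simp: cube_def)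
  moreover have "finite {xs. set xs \<subseteq> real ` {1..d} \<and> length xs = n}"
    by (rule finite_lists_length_eq) auto
  ultimately show ?thesis by (rule finite_subset)
qed

lemma comb_sub_cube:
  assumes "\<tau> \<in> patterns d n"
  shows "comb_line d \<tau> \<subseteq> cube d n"
proof
  fix x assume "x \<in> comb_line d \<tau>"
  then obtain k where k: "k \<in> {1..d}" "x = subst_star \<tau> (real k)"
    by (auto simp: comb_line_def)
  have "set x \<subseteq> real ` {1..d}"
  proof
    fix y assume "y \<in> set x"
    then obtain e where e: "e \<in> set \<tau>" "y = (case e of None \<Rightarrow> real k | Some k \<Rightarrow> real k)"
      using k by (auto simp: subst_star_def)
    then have "e \<in> insert None (Some ` {1..d})" using assms by (auto simp: patterns_def)
    then show "y \<in> real ` {1..d}" using e k by auto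
  qed
  then show "x \<in> cube d n" using assms k by (simp add: cube_def patterns_def)
qed

theorem lemma2p4:
  fixes d n :: nat and v :: "nat \<Rightarrow> real \<times> real"
  assumes pos: "\<forall>i<n. fst (v i) > 0"
    and distinct: "inj_on (pt v) (cube d n)"
    and lines: "\<forall>\<tau>\<in>patterns d n.
                  span_line v \<tau> \<inter> pt v ` cube d n = pt v ` comb_line d \<tau>"
  shows "\<forall>\<tau>\<in>patterns d n.
           (\<exists>g :: real ^ 5 \<Rightarrow> real. affine_fun g
              \<and> (\<forall>q\<in>nu ` pt v ` comb_line d \<tau>. g q = 0)
              \<and> (\<forall>q\<in>nu ` (pt v ` cube d n - pt v ` comb_line d \<tau>). g q > 0))
         \<and> (convex hull (nu ` pt v ` comb_line d \<tau>)) face_of (convex hull (nu ` pt v ` cube d n))"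
proof
  fix \<tau> assume tau: "\<tau> \<in> patterns d n"
  have len: "length \<tau> = n" using tau by (simp add: patterns_def)
  define p where "p = pt v (subst_star \<tau> 0)"
  define w where "w = (\<Sum>i<length \<tau>. (if \<tau>!i = None then 1 else 0) *\<^sub>R v i)"
  have ptt: "\<And>t. pt v (subst_star \<tau> t) = p + t *\<^sub>R w"
    unfolding p_def w_def by (rule pt_subst)
  obtain i0 where i0: "i0 < n" "\<tau>!i0 = None"
    using tau by (auto simp: patterns_def in_set_conv_nth)
  have fw: "fst w = (\<Sum>i<n. (if \<tau>!i = None then 1 else 0) * fst (v i))"
    unfolding w_def len by (simp add: fst_sum)
  have w1: "fst w > 0" unfolding fw
    by (rule sum_pos2[of _ i0]) (use i0 pos in auto)
  define K where "K = fst w * snd p - snd w * fst p"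
  define c where "c = (\<lambda>q::real\<times>real. fst w * snd q - snd w * fst q - K)"
  define A where "A = (vector [(snd w)\<^sup>2, -2 * fst w * snd w, (fst w)\<^sup>2, 2 * K * snd w, -2 * K * fst w] :: real^5)"
  define g where "g = (\<lambda>z. inner A z + K\<^sup>2)"
  have gnu: "\<And>q. g (nu q) = (c q)\<^sup>2"
  proof -
    fix q :: "real \<times> real"
    obtain x y where q: "q = (x, y)" by (cases q)
    show "g (nu q) = (c q)\<^sup>2"
      unfolding g_def A_def nu_def q c_def
      by (simp add: inner5 power2_eq_square algebra_simps)
  qed
  have c_line: "\<And>t. c (p + t *\<^sub>R w) = 0"
    unfolding c_def K_def by (simp add: algebra_simps)
  have c_zero: "\<And>q. c q = 0 \<Longrightarrow> q \<in> span_line v \<tau>"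
  proof -
    fix q assume cq: "c q = 0"
    define t where "t = (fst q - fst p) / fst w"
    have "fst (p + t *\<^sub>R w) = fst q" using w1 by (simp add: t_def)
    moreover have "snd (p + t *\<^sub>R w) = snd q"
    proof -
      have e: "fst w * (snd q - snd p) = snd w * (fst q - fst p)"
        using cq unfolding c_def K_def by (simp add: algebra_simps)
      have "snd p + t * snd w = snd q" unfolding t_def using w1 e
        by (simp add: field_simps)
      then show ?thesis by simp
    qed
    ultimately have "q = p + t *\<^sub>R w" by (simp add: prod_eq_iff)
    then show "q \<in> span_line v \<tau>" unfolding span_line_def using ptt by auto
  qed
  have zero: "\<forall>q\<in>nu ` pt v ` comb_line d \<tau>. g q = 0"
    using c_line gnu ptt by (auto simp: comb_line_def)
  have posg: "\<forall>q\<in>nu ` (pt v ` cube d n - pt v ` comb_line d \<tau>). g q > 0"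
  proof
    fix q assume "q \<in> nu ` (pt v ` cube d n - pt v ` comb_line d \<tau>)"
    then obtain r where r: "r \<in> pt v ` cube d n" "r \<notin> pt v ` comb_line d \<tau>" "q = nu r" by auto
    have "c r \<noteq> 0"
    proof
      assume "c r = 0"
      then have "r \<in> span_line v \<tau>" by (rule c_zero)
      then show False using lines tau r by blast
    qed
    then show "g q > 0" using r gnu by simp
  qed
  have aff: "affine_fun g" unfolding affine_fun_def g_def by blast
  let ?S = "nu ` pt v ` cube d n" and ?T = "nu ` pt v ` comb_line d \<tau>"
  have fin: "finite ?S" using finite_cube by simp
  have sub: "?T \<subseteq> ?S" using comb_sub_cube[OF tau] by blast
  have h1: "affine hull ?T \<subseteq> {z. inner A z = - K\<^sup>2}"
    by (rule hull_minimal) (use zero in \<open>auto simp: g_def affine_hyperplane\<close>)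
  have h2: "convex hull (?S - ?T) \<subseteq> {z. inner A z > - K\<^sup>2}"
  proof (rule hull_minimal)
    show "?S - ?T \<subseteq> {z. inner A z > - K\<^sup>2}"
    proof
      fix z assume "z \<in> ?S - ?T"
      then have "z \<in> nu ` (pt v ` cube d n - pt v ` comb_line d \<tau>)" by blast
      then have "g z > 0" using posg by blast
      then show "z \<in> {z. inner A z > - K\<^sup>2}" by (simp add: g_def)
    qed
  qed (rule convex_halfspace_gt)
  have "affine hull ?T \<inter> convex hull (?S - ?T) = {}"
    using h1 h2 by force
  then have "(convex hull ?T) face_of (convex hull ?S)"
    by (rule face_of_convex_hulls[OF fin sub])
  then show "(\<exists>g :: real ^ 5 \<Rightarrow> real. affine_fun g
              \<and> (\<forall>q\<in>nu ` pt v ` comb_line d \<tau>. g q = 0)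
              \<and> (\<forall>q\<in>nu ` (pt v ` cube d n - pt v ` comb_line d \<tau>). g q > 0))
         \<and> (convex hull ?T) face_of (convex hull ?S)"
    using aff zero posg by blast
qed

end
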